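(* Let $\mathcal Q=(\mathcal G,\mathcal C)$ be a CWS code in standard form with $K=|\mathcal C|>1$, and suppose the $j$-th bit is involved in $\mathcal C$. Then the graph-stabilizer generator $S_j=X_jZ^{\mathbf r_j}$ is not detectable by $\mathcal Q$. Consequently the distance of $\mathcal Q$ is at most $\mathrm{wgt}(S_j)=1+\deg_{\mathcal G}(j)$.
   Context: A Pauli operator on $n$ qubits is, up to a phase, $X^{\mathbf v}Z^{\mathbf u}=X_1^{v_1}\cdots X_n^{v_n}Z_1^{u_1}\cdots Z_n^{u_n}$ with $\mathbf v,\mathbf u\in\{0,1\}^n$; its weight is the number of qubits on which it acts as a non-identity operator. For a subspace $\mathcal Q\subseteq(\mathbb C^2)^{\otimes n}$ with orthonormal basis $\{|i\rangle\}$, a Pauli operator $E$ is detectable if $\langle j|E|i\rangle=C_E\delta_{ij}$ for all $i,j$, with $C_E$ independent of $i,j$; the distance of $\mathcal Q$ is the smallest weight of a non-detectable Pauli operator. Let $\mathcal G$ be a simple graph on vertex set $\{1,\dots,n\}$ with adjacency matrix $R\in\{0,1\}^{n\times n}$ (symmetric, zero diagonal) and rows $\mathbf r_i$. The graph-stabilizer generators are $S_i=X_iZ^{\mathbf r_i}$, $i=1,\dots,n$; they commute, generate an abelian group $\mathscr S_{\mathcal G}$, and stabilize a unique (up to phase) state $|s\rangle$, the graph state. For a binary code $\mathcal C\subseteq\{0,1\}^n$ with $K$ words, the CWS code in standard form is $\mathcal Q=(\mathcal G,\mathcal C)=\operatorname{span}\{Z^{\mathbf c}|s\rangle:\mathbf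 c\in\mathcal C\}$; it has dimension $K$. The $j$-th bit is involved in $\mathcal C$ if there exist $\mathbf c_1,\mathbf c_2\in\mathcal C$ whose $j$-th coordinates differ. *)

theory Defs
  imports Complex_Main
begin

text \<open>Qubits are indexed 0..n-1. Computational basis vectors are bit strings
  x :: nat => bool vanishing outside {0..<n}.\<close>

definition bits :: "nat \<Rightarrow> (nat \<Rightarrow> bool) set" where
  "bits n = {x. \<forall>i\<ge>n. \<not> x i}"

type_synonym qstate = "(nat \<Rightarrow> bool) \<Rightarrow> complex"

definition vecs :: "nat \<Rightarrow> qstate set" where
  "vecs n = {\<psi>. \<forall>y. y \<notin> bits n \<longrightarrow> \<psi> y = 0}"

definition inner_q :: "nat \<Rightarrow> qstate \<Rightarrow> qstate \<Rightarrow> complex" where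
  "inner_q n \<phi> \<psi> = (\<Sum>y\<in>bits n. cnj (\<phi> y) * \<psi> y)"

definition bxor :: "(nat \<Rightarrow> bool) \<Rightarrow> (nat \<Rightarrow> bool) \<Rightarrow> (nat \<Rightarrow> bool)" where
  "bxor x y = (\<lambda>i. x i \<noteq> y i)"

text \<open>The Pauli operator X^v Z^u: X^v Z^u |x> = (-1)^(u.x) |x xor v>.\<close>
definition pauli :: "nat \<Rightarrow> (nat \<Rightarrow> bool) \<Rightarrow> (nat \<Rightarrow> bool) \<Rightarrow> qstate \<Rightarrow> qstate" where
  "pauli n v u \<psi> = (\<lambda>y. (-1) ^ card {i. i < n \<and> u i \<and> bxor y v i} * \<psi> (bxor y v))"

definition pauli_weight :: "nat \<Rightarrow> (nat \<Rightarrow> bool) \<Rightarrow> (nat \<Rightarrow> bool) \<Rightarrow> nat" where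
  "pauli_weight n v u = card {i. i < n \<and> (v i \<or> u i)}"

definition simple_graph :: "nat \<Rightarrow> (nat \<Rightarrow> nat \<Rightarrow> bool) \<Rightarrow> bool" where
  "simple_graph n R \<longleftrightarrow> (\<forall>i j. R i j \<longrightarrow> i < n \<and> j < n) \<and>
     (\<forall>i j. R i j \<longleftrightarrow> R j i) \<and> (\<forall>i. \<not> R i i)"

definition adj_row :: "nat \<Rightarrow> (nat \<Rightarrow> nat \<Rightarrow> bool) \<Rightarrow> nat \<Rightarrow> (nat \<Rightarrow> bool)" where
  "adj_row n R i = (\<lambda>k. k < n \<and> R i k)"

definition unit_bit :: "nat \<Rightarrow> (nat \<Rightarrow> bool)" where
  "unit_bit i = (\<lambda>k. k = i)"

definition degree :: "nat \<Rightarrow> (nat \<Rightarrow> nat \<Rightarrow> bool) \<Rightarrow> nat \<Rightarrow> nat" where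
  "degree n R i = card {k. k < n \<and> R i k}"

definition graph_stab :: "nat \<Rightarrow> (nat \<Rightarrow> nat \<Rightarrow> bool) \<Rightarrow> nat \<Rightarrow> qstate \<Rightarrow> qstate" where
  "graph_stab n R i = pauli n (unit_bit i) (adj_row n R i)"

definition is_graph_state :: "nat \<Rightarrow> (nat \<Rightarrow> nat \<Rightarrow> bool) \<Rightarrow> qstate \<Rightarrow> bool" where
  "is_graph_state n R s \<longleftrightarrow> s \<in> vecs n \<and> inner_q n s s = 1 \<and>
     (\<forall>i<n. graph_stab n R i s = s)"

text \<open>CWS code in standard form: span of Z^c |s>, c in C.\<close>
definition cws_code :: "nat \<Rightarrow> qstate \<Rightarrow> (nat \<Rightarrow> bool) set \<Rightarrow> qstate set" where
  "cws_code n s C = {\<psi>. \<exists>a. \<psi> = (\<lambda>y. \<Sum>c\<in>C. a c * pauli n (\<lambda>_. False) c s y)}"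

definition orthonormal_basis :: "nat \<Rightarrow> qstate set \<Rightarrow> qstate set \<Rightarrow> bool" where
  "orthonormal_basis n Q B \<longleftrightarrow> finite B \<and> B \<subseteq> Q \<and>
     (\<forall>b\<in>B. inner_q n b b = 1) \<and>
     (\<forall>b\<in>B. \<forall>b'\<in>B. b \<noteq> b' \<longrightarrow> inner_q n b b' = 0) \<and>
     (\<forall>\<psi>\<in>Q. \<exists>a. \<psi> = (\<lambda>y. \<Sum>b\<in>B. a b * b y))"

text \<open>E detectable: <j|E|i> = C_E delta_ij for an orthonormal basis of Q
  (we require it for every orthonormal basis; the notion is basis independent).\<close>
definition detectable :: "nat \<Rightarrow> qstate set \<Rightarrow> (qstate \<Rightarrow> qstate) \<Rightarrow> bool" where
  "detectable n Q E \<longleftrightarrow> (\<forall>B. orthonormal_basis n Q B \<longrightarrow>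
     (\<exists>CE. \<forall>i\<in>B. \<forall>j\<in>B. inner_q n j (E i) = (if i = j then CE else 0)))"

definition code_distance :: "nat \<Rightarrow> qstate set \<Rightarrow> nat" where
  "code_distance n Q = (LEAST w. \<exists>v\<in>bits n. \<exists>u\<in>bits n.
      \<not> detectable n Q (pauli n v u) \<and> pauli_weight n v u = w)"

end

theory Submission
  imports Defs
begin

lemma m1sq: "((-1::complex)^k) * ((-1)^k) = 1"
  by (simp flip: power_mult_distrib)

lemma cnj_m1: "cnj ((-1::complex)^k) = (-1)^k"
  by simp

lemma bxor_inv: "bxor (bxor y v) v = y"
  by (auto simp: bxor_def)

lemma bits_toggle: "i < n \<Longrightarrow> y \<in> bits n \<Longrightarrow> bxor y (unit_bit i) \<in> bits n"
  by (auto simp: bits_def bxor_def unit_bit_def)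

lemma finite_bits: "finite (bits n)"
proof -
  have "bits n = (\<lambda>S i. i \<in> S) ` Pow {..<n}"
  proof (rule set_eqI, rule iffI)
    fix x assume "x \<in> bits n"
    then have "x = (\<lambda>i. i \<in> {i. x i})" "{i. x i} \<in> Pow {..<n}"
      by (auto simp: bits_def) (meson not_le)
    then show "x \<in> (\<lambda>S i. i \<in> S) ` Pow {..<n}" by blast
  qed (auto simp: bits_def)
  then show ?thesis by simp
qed

lemma par_toggle:
  assumes "i < n"
  shows "(-1::complex)^card {k. k<n \<and> c k \<and> bxor y (unit_bit i) k}
       = (if c i then -1 else 1) * (-1)^card {k. k<n \<and> c k \<and> y k}"
proof -
  let ?A = "{k. k<n \<and> c k \<and> y k}"
  let ?A' = "{k. k<n \<and> c k \<and> bxor y (unit_bit i) k}"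
  have fin: "finite ?A" by simp
  show ?thesis
  proof (cases "c i")
    case False
    then have "?A' = ?A" by (auto simp: bxor_def unit_bit_def)
    then show ?thesis using False by simp
  next
    case True
    show ?thesis
    proof (cases "y i")
      case True
      have "?A' = ?A - {i}" using True \<open>c i\<close> by (auto simp: bxor_def unit_bit_def)
      moreover have "i \<in> ?A" using True \<open>c i\<close> assms by simp
      ultimately have "card ?A = Suc (card ?A')"
        using fin by (metis card_Suc_Diff1)
      then show ?thesis using \<open>c i\<close> by simp
    next
      case False
      have "?A' = insert i ?A" using False \<open>c i\<close> assms by (auto simp: bxor_def unit_bit_def)
      moreover have "i \<notin> ?A" using False by simp
      ultimately have "card ?A' = Suc (card ?A)"
        using fin by simp
      then show ?thesis using \<open>c i\<close> by simp
    qed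
  qed
qed

lemma pauliZ: "pauli n (\<lambda>_. False) c \<psi> = (\<lambda>y. (-1)^card{i. i<n \<and> c i \<and> y i} * \<psi> y)"
  by (simp add: pauli_def bxor_def)

lemma gs_expand: "graph_stab n R j \<psi> = (\<lambda>y. (-1) ^ card {i. i < n \<and> adj_row n R j i \<and> bxor y (unit_bit j) i} * \<psi> (bxor y (unit_bit j)))"
  by (simp add: graph_stab_def pauli_def)

lemma commute:
  assumes "j < n"
  shows "graph_stab n R j (pauli n (\<lambda>_. False) c \<psi>) y
     = (if c j then -1 else 1) * pauli n (\<lambda>_. False) c (graph_stab n R j \<psi>) y"
  unfolding gs_expand pauliZ using par_toggle[OF assms, of c y] by (simp add: algebra_simps)

lemma normZ: "inner_q n (pauli n (\<lambda>_. False) c \<psi>) (pauli n (\<lambda>_. False) c \<psi>) = inner_q n \<psi> \<psi>"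
  unfolding inner_q_def pauliZ
  by (rule sum.cong) (auto simp: algebra_simps m1sq)

lemma abs_inv:
  assumes "is_graph_state n R s" "i < n"
  shows "cnj (s (bxor y (unit_bit i))) * s (bxor y (unit_bit i)) = cnj (s y) * s y"
proof -
  have "graph_stab n R i s y = s y" using assms unfolding is_graph_state_def by auto
  then have "s y = (-1) ^ card {k. k < n \<and> adj_row n R i k \<and> bxor y (unit_bit i) k} * s (bxor y (unit_bit i))"
    unfolding gs_expand by simp
  then show ?thesis by (simp add: algebra_simps m1sq)
qed

lemma orth:
  assumes gs: "is_graph_state n R s" and c: "c \<in> bits n" and c': "c' \<in> bits n" and ne: "c \<noteq> c'"
  shows "inner_q n (pauli n (\<lambda>_. False) c s) (pauli n (\<lambda>_. False) c' s) = 0"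
proof -
  obtain i where ci: "c i \<noteq> c' i" using ne by blast
  have i: "i < n" using c c' ci unfolding bits_def by (metis mem_Collect_eq not_le)
  define g where "g y = (-1::complex)^card{k. k<n \<and> c k \<and> y k} * (-1)^card{k. k<n \<and> c' k \<and> y k} * (cnj (s y) * s y)" for y
  have T: "inner_q n (pauli n (\<lambda>_. False) c s) (pauli n (\<lambda>_. False) c' s) = sum g (bits n)"
    unfolding inner_q_def pauliZ g_def by (rule sum.cong) (auto simp: algebra_simps)
  have gt: "g (bxor y (unit_bit i)) = - g y" for y
    unfolding g_def using par_toggle[OF i, of c y] par_toggle[OF i, of c' y] abs_inv[OF gs i, of y] ci
    by (cases "c i") auto
  have "sum g (bits n) = sum (\<lambda>y. g (bxor y (unit_bit i))) (bits n)"
    by (rule sum.reindex_bij_witness[where i="\<lambda>y. bxor y (unit_bit i)" and j="\<lambda>y. bxor y (unit_bit i)"])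
       (auto simp: bxor_inv bits_toggle[OF i])
  also have "\<dots> = - sum g (bits n)" by (simp add: gt sum_negf)
  finally have "sum g (bits n) = 0" by simp
  then show ?thesis using T by simp
qed

theorem lemma3:
  fixes n :: nat and R :: "nat \<Rightarrow> nat \<Rightarrow> bool" and s :: qstate
    and C :: "(nat \<Rightarrow> bool) set" and j :: nat
  assumes "simple_graph n R"
    and "is_graph_state n R s"
    and "C \<subseteq> bits n" and "finite C" and "card C > 1"
    and "j < n" and "\<exists>c1\<in>C. \<exists>c2\<in>C. c1 j \<noteq> c2 j"
  shows "\<not> detectable n (cws_code n s C) (graph_stab n R j)
    \<and> code_distance n (cws_code n s C) \<le> pauli_weight n (unit_bit j) (adj_row n R j)
    \<and> pauli_weight n (unit_bit j) (adj_row n R j) = 1 + degree n R j"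
proof -
  note gs = assms(2)
  define Zf where "Zf c = pauli n (\<lambda>_. False) c s" for c
  define B where "B = Zf ` C"
  define Q where "Q = cws_code n s C"
  have ss: "inner_q n s s = 1" using gs unfolding is_graph_state_def by simp
  have nrm: "inner_q n (Zf c) (Zf c) = 1" for c unfolding Zf_def normZ ss ..
  have orthC: "c \<in> C \<Longrightarrow> c' \<in> C \<Longrightarrow> c \<noteq> c' \<Longrightarrow> inner_q n (Zf c) (Zf c') = 0" for c c'
    unfolding Zf_def using orth[OF gs] assms(3) by blast
  have inj: "inj_on Zf C"
  proof (rule inj_onI, rule ccontr)
    fix c c' assume "c \<in> C" "c' \<in> C" "Zf c = Zf c'" "c \<noteq> c'"
    then show False using orthC nrm by (metis zero_neq_one)
  qed
  have onb: "orthonormal_basis n Q B"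
    unfolding orthonormal_basis_def
  proof (intro conjI ballI impI)
    show "finite B" unfolding B_def using assms(4) by simp
    show "B \<subseteq> Q"
    proof
      fix b assume "b \<in> B"
      then obtain c where c: "c \<in> C" "b = Zf c" unfolding B_def by blast
      have "b = (\<lambda>y. \<Sum>c'\<in>C. (if c' = c then 1 else 0) * pauli n (\<lambda>_. False) c' s y)"
        using c assms(4) by (intro ext) (simp add: Zf_def if_distrib[of "\<lambda>x. x * _"] sum.delta' cong: if_cong)
      then show "b \<in> Q" unfolding Q_def cws_code_def by (intro CollectI exI)
    qed
    show "inner_q n b b = 1" if "b \<in> B" for b using that nrm unfolding B_def by blast
    show "inner_q n b b' = 0" if "b \<in> B" "b' \<in> B" "b \<noteq> b'" for b b'
      using that orthC unfolding B_def by blast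
    show "\<exists>a. \<psi> = (\<lambda>y. \<Sum>b\<in>B. a b * b y)" if psiQ: "\<psi> \<in> Q" for \<psi>
    proof -
      obtain a where a: "\<psi> = (\<lambda>y. \<Sum>c\<in>C. a c * pauli n (\<lambda>_. False) c s y)"
        using psiQ unfolding Q_def cws_code_def by blast
      have "\<psi> = (\<lambda>y. \<Sum>b\<in>B. (a \<circ> the_inv_into C Zf) b * b y)"
        unfolding B_def a
        by (subst sum.reindex[OF inj]) (simp add: the_inv_into_f_f[OF inj], simp add: Zf_def)
      then show ?thesis by blast
    qed
  qed
  have stab: "graph_stab n R j s = s" using gs assms(6) unfolding is_graph_state_def by blast
  have diag: "inner_q n (Zf c) (graph_stab n R j (Zf c)) = (if c j then -1 else 1)" for c
  proof -
    have "graph_stab n R j (Zf c) = (\<lambda>y. (if c j then -1 else 1) * Zf c y)"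
      unfolding Zf_def using commute[OF assms(6), of R c s] stab by auto
    then show ?thesis unfolding inner_q_def
      using nrm[of c] by (simp add: inner_q_def sum_distrib_left[symmetric] mult.left_commute sum_negf)
  qed
  have nd: "\<not> detectable n Q (graph_stab n R j)"
  proof
    assume "detectable n Q (graph_stab n R j)"
    then obtain CE where CE: "\<forall>i\<in>B. \<forall>k\<in>B. inner_q n k (graph_stab n R j i) = (if i = k then CE else 0)"
      using onb unfolding detectable_def by blast
    obtain c1 c2 where c: "c1 \<in> C" "c2 \<in> C" "c1 j \<noteq> c2 j" using assms(7) by blast
    have "Zf c1 \<in> B" "Zf c2 \<in> B" using c unfolding B_def by auto
    then have "inner_q n (Zf c1) (graph_stab n R j (Zf c1)) = CE"
       "inner_q n (Zf c2) (graph_stab n R j (Zf c2)) = CE" using CE by auto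
    then show False using diag[of c1] diag[of c2] c(3) by (auto split: if_splits)
  qed
  have ub: "unit_bit j \<in> bits n" using assms(6) by (auto simp: bits_def unit_bit_def)
  have ar: "adj_row n R j \<in> bits n" by (auto simp: bits_def adj_row_def)
  have dist: "code_distance n Q \<le> pauli_weight n (unit_bit j) (adj_row n R j)"
    unfolding code_distance_def by (rule Least_le) (use ub ar nd in \<open>unfold graph_stab_def, blast\<close>)
  have "{i. i < n \<and> (unit_bit j i \<or> adj_row n R j i)} = insert j {k. k < n \<and> R j k}"
    using assms(6) by (auto simp: unit_bit_def adj_row_def)
  moreover have "j \<notin> {k. k < n \<and> R j k}" using assms(1) unfolding simple_graph_def by blast
  ultimately have w: "pauli_weight n (unit_bit j) (adj_row n R j) = 1 + degree n R j"
    unfolding pauli_weight_def degree_def by simp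
  show ?thesis using nd dist w unfolding Q_def by blast
qed

end
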